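(* Let $K$ be a field, $S=K[x_1,\ldots,x_n]$, and let $I=(x_{i_1}^2,\ldots,x_{i_k}^2,J)\subset S$ be a monomial ideal generated in degree $2$, where $i_1,\ldots,i_k$ are distinct and $J$ is the ideal generated by all squarefree monomials in $I$. Let $G$ be the graph on vertex set $[n]$ with $\{i,j\}$ ($i\ne j$) an edge iff $x_ix_j\in J$, and let $\overline{G}$ be its complementary graph. Suppose $I$ has a linear resolution, and let $\Delta$ be a quasi-tree whose $1$-skeleton is $\overline{G}$ (such a quasi-tree exists under this hypothesis). Then each $i_j$, $j=1,\ldots,k$, is a free vertex of $\Delta$, and no two of the vertices $i_1,\ldots,i_k$ belong to the same facet of $\Delta$.
   Context: The complementary graph $\overline{G}$ has vertex set $[n]$ and as edges exactly the pairs $\{i,j\}$, $i\ne j$, that are not edges of $G$. For a simplicial complex $\Delta$ with set of facets $\mathcal F(\Delta)$: a facet $F$ is a leaf if either $F$ is the only facet, or there is a facet $G'\ne F$ with $H\cap F\subseteq G'\cap F$ for every facet $H\neq F$. $\Delta$ is a quasi-tree if its facets can be labelled $F_1,\ldots,F_m$ so that for each $i$, $F_i$ is a leaf of the subcomplex $\langle F_1,\ldots,F_i\rangle$ generated by $F_1,\ldots,F_i$. A vertex is a free vertex of $\Delta$ if it belongs to exactly one facet. The $1$-skeleton of $\Delta$ is the graph of its vertices and $1$-dimensional faces. Linear resolution: minimal graded free resolution with $F_i\cong S(-2-i)^{\beta_i}$. *)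

theory Defs
  imports Main "HOL-Library.Poly_Mapping"
begin

text \<open>Polynomials: finitely supported maps from exponent vectors (monomials) to coefficients.
  Variables are indexed by naturals; S n is the subring K[x_1,...,x_n].\<close>

type_synonym 'k mpoly = "(nat \<Rightarrow>\<^sub>0 nat) \<Rightarrow>\<^sub>0 'k"

definition polyring :: "nat \<Rightarrow> ('k::field) mpoly set" where
  "polyring n = {p. \<forall>m\<in>Poly_Mapping.keys p. Poly_Mapping.keys m \<subseteq> {1..n}}"

definition monom :: "(nat \<Rightarrow>\<^sub>0 nat) \<Rightarrow> ('k::field) mpoly" where
  "monom m = Poly_Mapping.single m 1"

definition var :: "nat \<Rightarrow> ('k::field) mpoly" where
  "var i = monom (Poly_Mapping.single i 1)"

definition mdeg :: "(nat \<Rightarrow>\<^sub>0 nat) \<Rightarrow> nat" where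
  "mdeg m = (\<Sum>i\<in>Poly_Mapping.keys m. Poly_Mapping.lookup m i)"

definition squarefree_monomial :: "(nat \<Rightarrow>\<^sub>0 nat) \<Rightarrow> bool" where
  "squarefree_monomial m \<longleftrightarrow> (\<forall>i. Poly_Mapping.lookup m i \<le> 1)"

text \<open>homogeneous of degree d (the zero polynomial is homogeneous of every degree)\<close>
definition homogeneous :: "nat \<Rightarrow> ('k::field) mpoly \<Rightarrow> bool" where
  "homogeneous d p \<longleftrightarrow> (\<forall>m\<in>Poly_Mapping.keys p. mdeg m = d)"

definition ideal_gen :: "nat \<Rightarrow> ('k::field) mpoly set \<Rightarrow> 'k mpoly set" where
  "ideal_gen n Gs = {(\<Sum>g\<in>F. c g * g) | F c. finite F \<and> F \<subseteq> Gs \<and> (\<forall>g\<in>F. c g \<in> polyring n)}"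

text \<open>Elements of S^b, represented as functions nat => S vanishing from index b on.\<close>
definition matmap :: "nat \<Rightarrow> nat \<Rightarrow> (nat \<Rightarrow> nat \<Rightarrow> ('k::field) mpoly) \<Rightarrow> (nat \<Rightarrow> 'k mpoly) \<Rightarrow> (nat \<Rightarrow> 'k mpoly)" where
  "matmap b b' d v = (\<lambda>r. if r < b then (\<Sum>c<b'. d r c * v c) else 0)"

definition fvecs' :: "nat \<Rightarrow> nat \<Rightarrow> (nat \<Rightarrow> ('k::field) mpoly) set" where
  "fvecs' n b = {v. (\<forall>c<b. v c \<in> polyring n) \<and> (\<forall>c\<ge>b. v c = 0)}"

text \<open>The ideal I of S = K[x_1..x_n] (generated in degree 2) has a linear resolution:
  there is a graded free resolution
  0 -> F_L -> ... -> F_1 -> F_0 -> I -> 0 with F_i = S(-2-i)^(beta i).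
  Concretely: F_0 -> I is given by beta 0 forms of degree 2 generating I, and each
  differential F_i -> F_(i-1) (i >= 1) is a beta(i-1) x beta i matrix of linear forms,
  and the complex is exact.  (A graded free resolution with these shifts is
  automatically minimal, so this is the minimal graded free resolution.)\<close>
definition linear_resolution :: "nat \<Rightarrow> ('k::field) mpoly set \<Rightarrow> bool" where
  "linear_resolution n I \<longleftrightarrow>
    (\<exists>(L::nat) (\<beta>::nat \<Rightarrow> nat) (d::nat \<Rightarrow> nat \<Rightarrow> nat \<Rightarrow> 'k mpoly).
       (\<forall>i r c. d i r c \<in> polyring n)
     \<and> (\<forall>c<\<beta> 0. homogeneous 2 (d 0 0 c))
     \<and> (\<forall>i\<in>{1..L}. \<forall>r<\<beta> (i - 1). \<forall>c<\<beta> i. homogeneous 1 (d i r c))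
     \<and> (\<lambda>v. matmap 1 (\<beta> 0) (d 0) v 0) ` fvecs' n (\<beta> 0) = I
     \<and> (\<forall>i<L. {v\<in>fvecs' n (\<beta> i). matmap (if i = 0 then 1 else \<beta> (i - 1)) (\<beta> i) (d i) v = (\<lambda>_. 0)}
               = matmap (\<beta> i) (\<beta> (Suc i)) (d (Suc i)) ` fvecs' n (\<beta> (Suc i)))
     \<and> {v\<in>fvecs' n (\<beta> L). matmap (if L = 0 then 1 else \<beta> (L - 1)) (\<beta> L) (d L) v = (\<lambda>_. 0)}
          = {\<lambda>_. 0})"

definition is_leaf :: "'a set set \<Rightarrow> 'a set \<Rightarrow> bool" where
  "is_leaf \<F> F \<longleftrightarrow> F \<in> \<F> \<and>
     (\<F> = {F} \<or> (\<exists>G'\<in>\<F>. G' \<noteq> F \<and> (\<forall>H\<in>\<F>. H \<noteq> F \<longrightarrow> H \<inter> F \<subseteq> G' \<inter> F)))"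

text \<open>A simplicial complex is represented by its set of facets: a finite family of
  finite, pairwise incomparable sets.\<close>
definition facet_family :: "'a set set \<Rightarrow> bool" where
  "facet_family \<F> \<longleftrightarrow> finite \<F> \<and> (\<forall>F\<in>\<F>. finite F) \<and>
     (\<forall>F\<in>\<F>. \<forall>G\<in>\<F>. F \<subseteq> G \<longrightarrow> F = G)"

text \<open>The facets of the subcomplex generated by F_1..F_i are F_1..F_i (they are pairwise
  incomparable).\<close>
definition quasi_tree :: "'a set set \<Rightarrow> bool" where
  "quasi_tree \<F> \<longleftrightarrow> facet_family \<F> \<and>
     (\<exists>Fs. distinct Fs \<and> set Fs = \<F> \<and>
        (\<forall>i<length Fs. is_leaf (set (take (Suc i) Fs)) (Fs ! i)))"

definition free_vertex :: "'a set set \<Rightarrow> 'a \<Rightarrow> bool" where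
  "free_vertex \<F> v \<longleftrightarrow> card {F\<in>\<F>. v \<in> F} = 1"

definition one_skeleton_is :: "'a set set \<Rightarrow> 'a set \<Rightarrow> ('a \<Rightarrow> 'a \<Rightarrow> bool) \<Rightarrow> bool" where
  "one_skeleton_is \<F> V E \<longleftrightarrow> \<Union>\<F> = V \<and>
     (\<forall>i\<in>V. \<forall>j\<in>V. i \<noteq> j \<longrightarrow> (E i j \<longleftrightarrow> (\<exists>F\<in>\<F>. i \<in> F \<and> j \<in> F)))"

end

theory Submission
  imports Defs
begin

abbreviation lk where "lk \<equiv> Poly_Mapping.lookup"
abbreviation ks where "ks \<equiv> Poly_Mapping.keys"

lemma lookup_mult_super:
  fixes f g :: "('a::comm_monoid_add \<Rightarrow>\<^sub>0 'b::comm_semiring_0)"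
  assumes "finite A" "finite B" "ks f \<subseteq> A" "ks g \<subseteq> B"
  shows "lk (f*g) k = (\<Sum>a\<in>A. \<Sum>b\<in>B. lk f a * lk g b when k = a + b)"
proof -
  have "lk (f*g) k = (\<Sum>l. lk f l * (\<Sum>q. lk g q when k = l + q))" by (rule lookup_mult)
  also have "\<dots> = (\<Sum>l\<in>A. lk f l * (\<Sum>q. lk g q when k = l + q))"
    apply (rule Sum_any.expand_superset)
    using assms by (auto simp: in_keys_iff dest!: mult_not_zero)
  also have "\<dots> = (\<Sum>l\<in>A. lk f l * (\<Sum>q\<in>B. lk g q when k = l + q))"
  proof (rule sum.cong[OF refl])
    fix l
    have "(\<Sum>q. lk g q when k = l + q) = (\<Sum>q\<in>B. lk g q when k = l + q)"
      apply (rule Sum_any.expand_superset)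
      using assms by (auto simp: in_keys_iff when_def split: if_splits)
    then show "lk f l * (\<Sum>q. lk g q when k = l + q) = lk f l * (\<Sum>q\<in>B. lk g q when k = l + q)" by simp
  qed
  also have "\<dots> = (\<Sum>a\<in>A. \<Sum>b\<in>B. lk f a * lk g b when k = a + b)"
    by (simp add: sum_distrib_left mult_when)
  finally show ?thesis .
qed

lemma lookup_mult_unique:
  fixes f g :: "('a::comm_monoid_add \<Rightarrow>\<^sub>0 'b::comm_semiring_0)"
  assumes "\<And>a b. a \<in> ks f \<Longrightarrow> b \<in> ks g \<Longrightarrow> k = a + b \<Longrightarrow> a = a0 \<and> b = b0"
    and "k = a0 + b0"
  shows "lk (f*g) k = lk f a0 * lk g b0"
proof -
  have "lk (f*g) k = (\<Sum>a\<in>insert a0 (ks f). \<Sum>b\<in>insert b0 (ks g). lk f a * lk g b when k = a + b)"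
    by (rule lookup_mult_super) auto
  also have "\<dots> = (\<Sum>a\<in>insert a0 (ks f). \<Sum>b\<in>insert b0 (ks g). if a = a0 \<and> b = b0 then lk f a0 * lk g b0 else 0)"
  proof (intro sum.cong refl)
    fix a b assume "a \<in> insert a0 (ks f)" "b \<in> insert b0 (ks g)"
    show "(lk f a * lk g b when k = a + b) = (if a = a0 \<and> b = b0 then lk f a0 * lk g b0 else 0)"
    proof (cases "a = a0 \<and> b = b0")
      case True then show ?thesis using assms(2) by simp
    next
      case False
      have "lk f a = 0 \<or> lk g b = 0 \<or> k \<noteq> a + b"
        using assms(1)[of a b] False by (auto simp: in_keys_iff)
      then show ?thesis using False by (auto simp: when_def)
    qed
  qed
  also have "\<dots> = lk f a0 * lk g b0"
  proof -
    have "\<And>a. (\<Sum>b\<in>insert b0 (ks g). if a = a0 \<and> b = b0 then lk f a0 * lk g b0 else 0)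
       = (if a = a0 then lk f a0 * lk g b0 else 0)"
      by (cases "a = a0") (simp_all add: sum.delta')
    then show ?thesis by (simp add: sum.delta')
  qed
  finally show ?thesis .
qed

lemma mdeg_super:
  assumes "finite S" "ks a \<subseteq> S"
  shows "mdeg a = (\<Sum>i\<in>S. lk a i)"
  unfolding mdeg_def
  by (rule sum.mono_neutral_left) (use assms in \<open>auto simp: in_keys_iff\<close>)

lemma mdeg_add: "mdeg (a + b) = mdeg a + mdeg b"
proof -
  let ?S = "ks a \<union> ks b"
  have f: "finite ?S" by simp
  have "mdeg (a + b) = (\<Sum>i\<in>?S. lk (a+b) i)"
    by (rule mdeg_super[OF f]) (rule keys_add)
  also have "\<dots> = (\<Sum>i\<in>?S. lk a i) + (\<Sum>i\<in>?S. lk b i)"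
    by (simp add: lookup_add sum.distrib)
  also have "\<dots> = mdeg a + mdeg b"
    using mdeg_super[OF f, of a] mdeg_super[OF f, of b] by simp
  finally show ?thesis .
qed

lemma mdeg_zero: "mdeg a = 0 \<Longrightarrow> a = 0"
proof (rule poly_mapping_eqI)
  fix k assume "mdeg a = 0"
  then have "\<forall>i\<in>ks a. lk a i = 0" unfolding mdeg_def by simp
  then show "lk a k = lk 0 k" by (auto simp: in_keys_iff)
qed

lemma mdeg_single: "mdeg (Poly_Mapping.single i (1::nat)) = 1"
  unfolding mdeg_def by simp

lemma mdeg_0[simp]: "mdeg 0 = 0"
  unfolding mdeg_def by simp


lemma keys_add_sub: "ks (a + b) \<subseteq> ks (a::nat \<Rightarrow>\<^sub>0 nat) \<union> ks b"
  by (rule keys_add)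

lemma polyring_mult: "p \<in> polyring n \<Longrightarrow> q \<in> polyring n \<Longrightarrow> p * q \<in> polyring n"
  unfolding polyring_def
proof (intro CollectI ballI)
  fix m assume p: "p \<in> {p. \<forall>m\<in>ks p. ks m \<subseteq> {1..n}}" and q: "q \<in> {p. \<forall>m\<in>ks p. ks m \<subseteq> {1..n}}"
    and m: "m \<in> ks (p * q)"
  obtain a b where ab: "m = a + b" "a \<in> ks p" "b \<in> ks q" using m keys_mult by blast
  have "ks a \<subseteq> {1..n}" "ks b \<subseteq> {1..n}" using p q ab by auto
  then show "ks m \<subseteq> {1..n}" using ab(1) keys_add_sub[of a b] by blast
qed

lemma polyring_add: "p \<in> polyring n \<Longrightarrow> q \<in> polyring n \<Longrightarrow> p + q \<in> polyring n"
  unfolding polyring_def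
proof (intro CollectI ballI)
  fix m assume p: "p \<in> {p. \<forall>m\<in>ks p. ks m \<subseteq> {1..n}}" and q: "q \<in> {p. \<forall>m\<in>ks p. ks m \<subseteq> {1..n}}"
    and m: "m \<in> ks (p + q)"
  have "m \<in> ks p \<or> m \<in> ks q" using m keys_add[of p q] by blast
  then show "ks m \<subseteq> {1..n}" using p q by auto
qed

lemma polyring_diff: "p \<in> polyring n \<Longrightarrow> q \<in> polyring n \<Longrightarrow> p - q \<in> polyring n"
  unfolding polyring_def
proof (intro CollectI ballI)
  fix m assume p: "p \<in> {p. \<forall>m\<in>ks p. ks m \<subseteq> {1..n}}" and q: "q \<in> {p. \<forall>m\<in>ks p. ks m \<subseteq> {1..n}}"
    and m: "m \<in> ks (p - q)"
  have "m \<in> ks p \<or> m \<in> ks q" using m by (auto simp: in_keys_iff lookup_minus)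
  then show "ks m \<subseteq> {1..n}" using p q by auto
qed

lemma polyring_zero: "0 \<in> polyring n"
  unfolding polyring_def by simp

lemma polyring_one: "1 \<in> polyring n"
  unfolding polyring_def by simp

lemma polyring_monom: "ks m \<subseteq> {1..n} \<Longrightarrow> monom m \<in> polyring n"
  unfolding polyring_def monom_def by simp



lemma ideal_gen_gen: "g \<in> Gs \<Longrightarrow> g \<in> ideal_gen n Gs"
  unfolding ideal_gen_def
  apply (rule CollectI)
  apply (rule exI[of _ "{g}"])
  apply (rule exI[of _ "\<lambda>_. 1"])
  apply (intro conjI)
  apply simp
  apply simp
  apply simp
  apply simp
  apply (simp add: polyring_one)
  done

lemma ideal_gen_keys:
  assumes "p \<in> ideal_gen n (monom ` A)" "X \<in> ks p"
  shows "\<exists>m\<in>A. \<exists>y. X = y + m"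
proof -
  have "\<exists>F c. p = (\<Sum>g\<in>F. c g * g) \<and> finite F \<and> F \<subseteq> monom ` A"
    using assms(1) unfolding ideal_gen_def by (simp only: mem_Collect_eq) blast
  then obtain F c where p: "p = (\<Sum>g\<in>F. c g * g)" and F: "finite F" "F \<subseteq> monom ` A"
    by blast
  have "X \<in> (\<Union>g\<in>F. ks (c g * g))" using assms(2) p keys_sum[of "\<lambda>g. c g * g" F] by auto
  then obtain g where g: "g \<in> F" "X \<in> ks (c g * g)" by blast
  obtain m where m: "m \<in> A" "g = monom m" using F g by blast
  have "X \<in> {a + b |a b. a \<in> ks (c g) \<and> b \<in> ks g}"
    using keys_mult[of "c g" g] g(2) by blast
  then obtain a b where "X = a + b" "b \<in> ks g" by blast
  then have "X = a + m" using m(2) unfolding monom_def by simp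
  then show ?thesis using m by blast
qed


lemma syz_vanish:
  fixes f l :: "nat \<Rightarrow> ('k::field) mpoly"
  assumes fM: "\<forall>c<b0. ks (f c) \<subseteq> M"
    and hl: "\<forall>c<b0. homogeneous 1 (l c)"
    and syz: "(\<Sum>c<b0. f c * l c) = 0"
    and degv: "mdeg v = 2"
    and cop: "\<forall>k. lk u k = 0 \<or> lk v k = 0"
    and hyp: "\<forall>w\<in>M. (\<forall>k. lk w k \<le> lk u k + lk v k) \<longrightarrow> w = u \<or> w = v"
  shows "(\<Sum>c<b0. lk (g * l c) v * lk (f c) u) = 0"
proof -
  have F3: "(\<Sum>c<b0. lk (l c) B * lk (f c) u) = 0" if Bv: "\<forall>k. lk B k \<le> lk v k" for B
  proof (cases "mdeg B = 1")
    case False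
    have "lk (l c) B = 0" if c: "c < b0" for c
    proof (rule ccontr)
      assume "lk (l c) B \<noteq> 0"
      then have "B \<in> ks (l c)" by (simp add: in_keys_iff)
      then have "mdeg B = 1" using hl c unfolding homogeneous_def by blast
      then show False using False by simp
    qed
    then show ?thesis by simp
  next
    case True
    have each: "lk (f c * l c) (u + B) = lk (f c) u * lk (l c) B" if c: "c < b0" for c
    proof (rule lookup_mult_unique)
      fix a b assume a: "a \<in> ks (f c)" and b: "b \<in> ks (l c)" and e: "u + B = a + b"
      have aM: "a \<in> M" using fM c a by auto
      have ek: "lk u k + lk B k = lk a k + lk b k" for k
        using arg_cong[OF e, of "\<lambda>x. lk x k"] by (simp add: lookup_add)
      have le: "\<forall>k. lk a k \<le> lk u k + lk v k"
      proof
        fix k show "lk a k \<le> lk u k + lk v k" using ek[of k] Bv[rule_format, of k] by linarith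
      qed
      then have "a = u \<or> a = v" using hyp aM by simp
      then show "a = u \<and> b = B"
      proof
        assume au: "a = u" then show ?thesis using e by simp
      next
        assume av: "a = v"
        have "B = v"
        proof (rule poly_mapping_eqI)
          fix k
          show "lk B k = lk v k"
          proof (cases "lk v k = 0")
            case True then show ?thesis using Bv[rule_format, of k] by simp
          next
            case False then have "lk u k = 0" using cop[rule_format, of k] by simp
            then show ?thesis using ek[of k] av Bv[rule_format, of k] by simp
          qed
        qed
        then show ?thesis using True degv by simp
      qed
    qed simp
    have "(\<Sum>c<b0. lk (l c) B * lk (f c) u) = (\<Sum>c<b0. lk (f c * l c) (u + B))"
      using each by (simp add: mult.commute)
    also have "\<dots> = lk (\<Sum>c<b0. f c * l c) (u + B)" by (simp add: lookup_sum)
    also have "\<dots> = 0" using syz by simp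
    finally show ?thesis .
  qed
  define BB where "BB = (\<Union>c<b0. ks (l c))"
  have finBB: "finite BB" unfolding BB_def by simp
  have rep: "lk (g * l c) v = (\<Sum>a\<in>ks g. \<Sum>b\<in>BB. lk g a * lk (l c) b when v = a + b)" if "c < b0" for c
    by (rule lookup_mult_super) (use that finBB in \<open>auto simp: BB_def\<close>)
  have "(\<Sum>c<b0. lk (g * l c) v * lk (f c) u)
      = (\<Sum>c<b0. \<Sum>a\<in>ks g. \<Sum>b\<in>BB. (lk g a * lk (l c) b when v = a + b) * lk (f c) u)"
    using rep by (simp add: sum_distrib_right)
  also have "\<dots> = (\<Sum>a\<in>ks g. \<Sum>c<b0. \<Sum>b\<in>BB. (lk g a * lk (l c) b when v = a + b) * lk (f c) u)"
    by (rule sum.swap)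
  also have "\<dots> = (\<Sum>a\<in>ks g. \<Sum>b\<in>BB. \<Sum>c<b0. (lk g a * lk (l c) b when v = a + b) * lk (f c) u)"
    by (rule sum.cong[OF refl], rule sum.swap)
  also have "\<dots> = 0"
  proof (rule sum.neutral, rule ballI, rule sum.neutral, rule ballI)
    fix a b
    show "(\<Sum>c<b0. (lk g a * lk (l c) b when v = a + b) * lk (f c) u) = 0"
    proof (cases "v = a + b")
      case True
      have "\<forall>k. lk b k \<le> lk v k" using True by (simp add: lookup_add)
      then have z: "(\<Sum>c<b0. lk (l c) b * lk (f c) u) = 0" by (rule F3)
      have "(\<Sum>c<b0. (lk g a * lk (l c) b when v = a + b) * lk (f c) u)
          = lk g a * (\<Sum>c<b0. lk (l c) b * lk (f c) u)"
        using True by (simp add: sum_distrib_left mult.assoc)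
      then show ?thesis using z by simp
    next
      case False then show ?thesis by simp
    qed
  qed
  finally show ?thesis .
qed


lemma homog2_coeff:
  fixes p q :: "('k::field) mpoly"
  assumes "homogeneous 2 p" "mdeg z = 2"
  shows "lk (p * q) z = lk p z * lk q 0"
proof (rule lookup_mult_unique)
  fix a b assume a: "a \<in> ks p" and b: "b \<in> ks q" and e: "z = a + b"
  have "mdeg a = 2" using assms(1) a unfolding homogeneous_def by blast
  then have "mdeg b = 0" using e assms(2) mdeg_add[of a b] by simp
  then have "b = 0" by (rule mdeg_zero)
  then show "a = z \<and> b = 0" using e by simp
qed simp

lemma monom_coeff_self:
  fixes q :: "('k::field) mpoly"
  shows "lk (monom v * q) v = lk q 0"
proof -
  have "lk (monom v * q) v = lk (monom v :: 'k mpoly) v * lk q 0"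
  proof (rule lookup_mult_unique)
    fix a b assume a: "a \<in> ks (monom v :: 'k mpoly)" and e: "v = a + b"
    have "a = v" using a unfolding monom_def by simp
    then show "a = v \<and> b = 0" using e by simp
  qed simp
  then show ?thesis unfolding monom_def by simp
qed

lemma monom_coeff_other:
  fixes q :: "('k::field) mpoly"
  assumes "mdeg u = mdeg v" "u \<noteq> v"
  shows "lk (monom u * q) v = 0"
proof (rule ccontr)
  assume "lk (monom u * q) v \<noteq> 0"
  then have "v \<in> ks (monom u * q)" by (simp add: in_keys_iff)
  then have "v \<in> {a + b |a b. a \<in> ks (monom u :: 'k mpoly) \<and> b \<in> ks q}" using keys_mult by blast
  then obtain b where e: "v = u + b" unfolding monom_def by auto
  then have "mdeg b = 0" using assms(1) mdeg_add[of u b] by simp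
  then have "b = 0" by (rule mdeg_zero)
  then show False using e assms(2) by simp
qed

lemma unit_fvecs: "k < b \<Longrightarrow> (\<lambda>r. if r = k then 1 else 0) \<in> fvecs' n b"
  unfolding fvecs'_def using polyring_one polyring_zero by auto

lemma sum_unit: "(k::nat) < b \<Longrightarrow> (\<Sum>c<b. (g c :: 'a::comm_semiring_1) * (if c = k then 1 else 0)) = g k"
proof -
  assume k: "k < b"
  have "(\<Sum>c<b. g c * (if c = k then 1 else 0)) = (\<Sum>c<b. if c = k then g c else 0)"
    by (rule sum.cong) auto
  also have "\<dots> = g k" using k by (subst sum.delta) auto
  finally show ?thesis .
qed


lemma nolin:
  fixes I :: "('k::field) mpoly set"
  assumes M_mon: "\<forall>m\<in>M. ks m \<subseteq> {1..n} \<and> mdeg m = 2"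
    and I_def: "I = ideal_gen n (monom ` M)"
    and lin: "linear_resolution n I"
    and uI: "(monom u :: 'k mpoly) \<in> I" and vI: "(monom v :: 'k mpoly) \<in> I"
    and degu: "mdeg u = 2" and degv: "mdeg v = 2"
    and ku: "ks u \<subseteq> {1..n}" and kv: "ks v \<subseteq> {1..n}"
    and cop: "\<forall>k. lk u k = 0 \<or> lk v k = 0"
    and hyp: "\<forall>w\<in>M. (\<forall>k. lk w k \<le> lk u k + lk v k) \<longrightarrow> w = u \<or> w = v"
  shows False
proof -
  obtain L \<beta> d where d: "\<forall>i r c. d i r c \<in> polyring n"
    and h0: "\<forall>c<\<beta> 0. homogeneous 2 (d 0 0 c :: 'k mpoly)"
    and h1: "\<forall>i\<in>{1..L}. \<forall>r<\<beta> (i - 1). \<forall>c<\<beta> i. homogeneous 1 (d i r c)"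
    and img: "(\<lambda>x. matmap 1 (\<beta> 0) (d 0) x 0) ` fvecs' n (\<beta> 0) = I"
    and ex: "\<forall>i<L. {x\<in>fvecs' n (\<beta> i). matmap (if i = 0 then 1 else \<beta> (i - 1)) (\<beta> i) (d i) x = (\<lambda>_. 0)}
               = matmap (\<beta> i) (\<beta> (Suc i)) (d (Suc i)) ` fvecs' n (\<beta> (Suc i))"
    and inj: "{x\<in>fvecs' n (\<beta> L). matmap (if L = 0 then 1 else \<beta> (L - 1)) (\<beta> L) (d L) x = (\<lambda>_. 0)}
          = {\<lambda>_. 0}"
    using lin unfolding linear_resolution_def by blast
  define b0 where "b0 = \<beta> 0"
  define f where "f c = d 0 0 c" for c
  have mm: "matmap 1 b0 (d 0) x 0 = (\<Sum>c<b0. f c * x c)" for x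
    unfolding matmap_def f_def by simp
  have fI: "f c \<in> I" if c: "c < b0" for c
  proof -
    have "matmap 1 b0 (d 0) (\<lambda>r. if r = c then 1 else 0) 0 = f c"
      unfolding mm using sum_unit[OF c, of f] by simp
    moreover have "(\<lambda>r. if r = c then 1 else 0) \<in> fvecs' n b0" using unit_fvecs[OF c] .
    ultimately show ?thesis using img unfolding b0_def by force
  qed
  have fM: "\<forall>c<b0. ks (f c) \<subseteq> M"
  proof (intro allI impI subsetI)
    fix c X assume c: "c < b0" and X: "X \<in> ks (f c)"
    obtain m y where m: "m \<in> M" "X = y + m" using ideal_gen_keys[OF fI[OF c, unfolded I_def] X] by blast
    have "mdeg X = 2" using h0 c X unfolding homogeneous_def f_def b0_def by blast
    then have "mdeg y = 0" using m M_mon mdeg_add[of y m] by simp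
    then have "y = 0" by (rule mdeg_zero)
    then show "X \<in> M" using m by simp
  qed
  have repr: "\<exists>a\<in>fvecs' n b0. (\<Sum>c<b0. f c * a c) = monom z" if z: "monom z \<in> I" for z
  proof -
    obtain a where "a \<in> fvecs' n b0" "matmap 1 b0 (d 0) a 0 = monom z"
      using z img unfolding b0_def by (metis (no_types, lifting) imageE)
    then show ?thesis unfolding mm by blast
  qed
  obtain a where a: "a \<in> fvecs' n b0" "(\<Sum>c<b0. f c * a c) = monom u" using repr[OF uI] by blast
  obtain bb where bb: "bb \<in> fvecs' n b0" "(\<Sum>c<b0. f c * bb c) = monom v" using repr[OF vI] by blast
  have coef: "(\<Sum>c<b0. lk (a c) 0 * lk (f c) u) = 1"
  proof -
    have "(1::'k) = lk (monom u :: 'k mpoly) u" unfolding monom_def by simp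
    also have "\<dots> = lk (\<Sum>c<b0. f c * a c) u" using a by simp
    also have "\<dots> = (\<Sum>c<b0. lk (f c * a c) u)" by (simp add: lookup_sum)
    also have "\<dots> = (\<Sum>c<b0. lk (a c) 0 * lk (f c) u)"
    proof (rule sum.cong[OF refl])
      fix c assume "c \<in> {..<b0}"
      then have "homogeneous 2 (f c)" using h0 unfolding f_def b0_def by simp
      then show "lk (f c * a c) u = lk (a c) 0 * lk (f c) u"
        using homog2_coeff[OF \<open>homogeneous 2 (f c)\<close> degu, of "a c"] by (simp add: mult.commute)
    qed
    finally show ?thesis by simp
  qed
  have uv: "u \<noteq> v"
  proof
    assume "u = v"
    have "u \<noteq> 0" using degu by auto
    then obtain k where "lk u k \<noteq> 0" by (metis lookup_zero poly_mapping_eqI)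
    then show False using cop \<open>u = v\<close> by metis
  qed
  define s where "s c = (if c < b0 then monom v * a c - monom u * bb c else 0)" for c
  have sF: "s \<in> fvecs' n b0"
  proof -
    have "monom v * a c - monom u * bb c \<in> polyring n" if "c < b0" for c
    proof -
      have "a c \<in> polyring n" "bb c \<in> polyring n" using a(1) bb(1) that unfolding fvecs'_def by auto
      moreover have "monom u \<in> polyring n" "monom v \<in> polyring n"
        using ku kv by (simp_all add: polyring_monom)
      ultimately show ?thesis by (intro polyring_diff polyring_mult)
    qed
    then show ?thesis unfolding fvecs'_def s_def by auto
  qed
  have sK: "matmap 1 b0 (d 0) s = (\<lambda>_. 0)"
  proof
    fix r
    show "matmap 1 b0 (d 0) s r = 0"
    proof (cases "r = 0")
      case True
      have "(\<Sum>c<b0. f c * s c) = (\<Sum>c<b0. monom v * (f c * a c) - monom u * (f c * bb c))"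
        by (rule sum.cong) (simp_all add: s_def algebra_simps)
      also have "\<dots> = monom v * (\<Sum>c<b0. f c * a c) - monom u * (\<Sum>c<b0. f c * bb c)"
        by (simp add: sum_subtractf sum_distrib_left)
      also have "\<dots> = 0" using a bb by (simp add: mult.commute)
      finally show ?thesis using True mm by simp
    next
      case False then show ?thesis unfolding matmap_def by simp
    qed
  qed
  define lam where "lam t = (\<Sum>c<b0. lk (t c) v * lk (f c) u)" for t :: "nat \<Rightarrow> 'k mpoly"
  have lam_s: "lam s = 1"
  proof -
    have "lam s = (\<Sum>c<b0. lk (a c) 0 * lk (f c) u)"
      unfolding lam_def
    proof (rule sum.cong[OF refl])
      fix c assume "c \<in> {..<b0}"
      then have "lk (s c) v = lk (a c) 0"
        using monom_coeff_self[of v "a c"] monom_coeff_other[of u v "bb c"] degu degv uv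
        by (simp add: s_def lookup_minus)
      then show "lk (s c) v * lk (f c) u = lk (a c) 0 * lk (f c) u" by simp
    qed
    then show ?thesis using coef by simp
  qed
  show False
  proof (cases "L = 0")
    case True
    have "s \<in> {x\<in>fvecs' n (\<beta> L). matmap (if L = 0 then 1 else \<beta> (L - 1)) (\<beta> L) (d L) x = (\<lambda>_. 0)}"
      using True sF sK unfolding b0_def by simp
    then have "s = (\<lambda>_. 0)" using inj by blast
    then have "lam s = 0" unfolding lam_def by simp
    then show False using lam_s by simp
  next
    case False
    define b1 where "b1 = \<beta> 1"
    have ex0: "{x\<in>fvecs' n b0. matmap 1 b0 (d 0) x = (\<lambda>_. 0)} = matmap b0 b1 (d 1) ` fvecs' n b1"
      using ex[rule_format, of 0] False unfolding b0_def b1_def by simp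
    obtain w where w: "w \<in> fvecs' n b1" "s = matmap b0 b1 (d 1) w"
      using ex0 sF sK by blast
    have col: "(\<Sum>c<b0. f c * d 1 c k) = 0" if k: "k < b1" for k
    proof -
      have "matmap b0 b1 (d 1) (\<lambda>r. if r = k then 1 else 0) \<in> {x\<in>fvecs' n b0. matmap 1 b0 (d 0) x = (\<lambda>_. 0)}"
        using ex0 unit_fvecs[OF k] by blast
      then have z: "matmap 1 b0 (d 0) (matmap b0 b1 (d 1) (\<lambda>r. if r = k then 1 else 0)) 0 = 0" by simp
      have "(\<Sum>c<b0. f c * d 1 c k) = (\<Sum>c<b0. f c * matmap b0 b1 (d 1) (\<lambda>r. if r = k then 1 else 0) c)"
      proof (rule sum.cong[OF refl])
        fix c assume "c \<in> {..<b0}"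
        then show "f c * d 1 c k = f c * matmap b0 b1 (d 1) (\<lambda>r. if r = k then 1 else 0) c"
          unfolding matmap_def using sum_unit[OF k, of "d 1 c"] by simp
      qed
      also have "\<dots> = 0" using z unfolding mm .
      finally show ?thesis .
    qed
    have hom1: "\<forall>c<b0. homogeneous 1 (d 1 c k)" if k: "k < b1" for k
      using h1 False k unfolding b0_def b1_def by auto
    have "lam s = (\<Sum>c<b0. \<Sum>k<b1. lk (w k * d 1 c k) v * lk (f c) u)"
      unfolding lam_def
    proof (rule sum.cong[OF refl])
      fix c assume c: "c \<in> {..<b0}"
      have "s c = (\<Sum>k<b1. w k * d 1 c k)" using w(2) c unfolding matmap_def by (simp add: mult.commute)
      then show "lk (s c) v * lk (f c) u = (\<Sum>k<b1. lk (w k * d 1 c k) v * lk (f c) u)"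
        by (simp add: lookup_sum sum_distrib_right)
    qed
    also have "\<dots> = (\<Sum>k<b1. \<Sum>c<b0. lk (w k * d 1 c k) v * lk (f c) u)" by (rule sum.swap)
    also have "\<dots> = 0"
    proof (rule sum.neutral, rule ballI)
      fix k assume "k \<in> {..<b1}"
      then have k: "k < b1" by simp
      show "(\<Sum>c<b0. lk (w k * d 1 c k) v * lk (f c) u) = 0"
        by (rule syz_vanish[OF fM hom1[OF k] col[OF k] degv cop hyp])
    qed
    finally show False using lam_s by simp
  qed
qed


abbreviation ee :: "nat \<Rightarrow> (nat \<Rightarrow>\<^sub>0 nat)" where "ee i \<equiv> Poly_Mapping.single i 1"

lemma lk_ee: "lk (ee p + ee q) k = (if k = p then 1 else 0) + (if k = q then 1 else 0)"
  by (simp add: lookup_add lookup_single when_def)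

lemma pm_ee_eqI:
  assumes h: "\<And>k. lk w k = (if k = p then 1 else 0) + (if k = q then 1 else 0)"
  shows "w = ee p + ee q"
proof (rule poly_mapping_eqI)
  fix k show "lk w k = lk (ee p + ee q) k" unfolding lk_ee by (rule h)
qed

lemma three_var:
  assumes "mdeg w = 2" "distinct [i,a,b]" "\<forall>k. k \<notin> {i,a,b} \<longrightarrow> lk w k = 0" "lk w a \<le> 1" "lk w b \<le> 1"
  shows "w = ee i + ee i \<or> w = ee i + ee a \<or> w = ee i + ee b \<or> w = ee a + ee b"
proof -
  have "ks w \<subseteq> {i,a,b}" using assms(3) by (auto simp: in_keys_iff)
  then have "mdeg w = lk w i + lk w a + lk w b" using mdeg_super[of "{i,a,b}" w] assms(2) by simp
  then have sm: "lk w i + lk w a + lk w b = 2" using assms(1) by simp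
  have z: "lk w k = 0" if "k \<noteq> i" "k \<noteq> a" "k \<noteq> b" for k using assms(3) that by simp
  have a01: "lk w a = 0 \<or> lk w a = 1" and b01: "lk w b = 0 \<or> lk w b = 1" using assms(4,5) by auto
  show ?thesis
  proof (cases "lk w a = 0")
    case a0: True
    show ?thesis
    proof (cases "lk w b = 0")
      case True
      then have "w = ee i + ee i" using a0 sm z assms(2) apply (intro pm_ee_eqI) subgoal for k by (cases "k = i"; cases "k = a"; cases "k = b"; auto) done
      then show ?thesis by simp
    next
      case False
      then have "w = ee i + ee b" using a0 b01 sm z assms(2) apply (intro pm_ee_eqI) subgoal for k by (cases "k = i"; cases "k = a"; cases "k = b"; auto) done
      then show ?thesis by simp
    qed
  next
    case a1: False
    show ?thesis
    proof (cases "lk w b = 0")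
      case True
      then have "w = ee i + ee a" using a1 a01 sm z assms(2) apply (intro pm_ee_eqI) subgoal for k by (cases "k = i"; cases "k = a"; cases "k = b"; auto) done
      then show ?thesis by simp
    next
      case False
      then have "w = ee a + ee b" using a1 a01 b01 sm z assms(2) apply (intro pm_ee_eqI) subgoal for k by (cases "k = i"; cases "k = a"; cases "k = b"; auto) done
      then show ?thesis by simp
    qed
  qed
qed

lemma two_var:
  assumes "mdeg w = 2" "i \<noteq> j" "\<forall>k. k \<notin> {i,j} \<longrightarrow> lk w k = 0"
  shows "w = ee i + ee i \<or> w = ee j + ee j \<or> w = ee i + ee j"
proof -
  have "ks w \<subseteq> {i,j}" using assms(3) by (auto simp: in_keys_iff)
  then have "mdeg w = lk w i + lk w j" using mdeg_super[of "{i,j}" w] assms(2) by simp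
  then have sm: "lk w i + lk w j = 2" using assms(1) by simp
  have z: "lk w k = 0" if "k \<noteq> i" "k \<noteq> j" for k using assms(3) that by simp
  have "lk w i = 0 \<or> lk w i = 1 \<or> lk w i = 2" using sm by linarith
  then show ?thesis
  proof (elim disjE)
    assume h: "lk w i = 0"
    then have "w = ee j + ee j" using sm z assms(2) by (intro pm_ee_eqI, rename_tac k, case_tac "k = i"; case_tac "k = j"; auto)
    then show ?thesis by simp
  next
    assume h: "lk w i = 1"
    then have "w = ee i + ee j" using sm z assms(2) by (intro pm_ee_eqI, rename_tac k, case_tac "k = i"; case_tac "k = j"; auto)
    then show ?thesis by simp
  next
    assume h: "lk w i = 2"
    then have "w = ee i + ee i" using sm z assms(2) by (intro pm_ee_eqI, rename_tac k, case_tac "k = i"; case_tac "k = j"; auto)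
    then show ?thesis by simp
  qed
qed

lemma flag_list:
  assumes "\<forall>i<length Fs. is_leaf (set (take (Suc i) Fs)) (Fs ! i)"
    and "C \<noteq> {}" "C \<subseteq> \<Union>(set Fs)"
    and "\<forall>a\<in>C. \<forall>b\<in>C. a \<noteq> b \<longrightarrow> (\<exists>F\<in>set Fs. a \<in> F \<and> b \<in> F)"
  shows "\<exists>F\<in>set Fs. C \<subseteq> F"
  using assms
proof (induction Fs arbitrary: C rule: rev_induct)
  case Nil
  then show ?case by auto
next
  case (snoc Fm Fs)
  have pre: "\<forall>i<length Fs. is_leaf (set (take (Suc i) Fs)) (Fs ! i)"
  proof (intro allI impI)
    fix i assume i: "i < length Fs"
    have "is_leaf (set (take (Suc i) (Fs @ [Fm]))) ((Fs @ [Fm]) ! i)"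
      using snoc.prems(1)[rule_format, of i] i by simp
    moreover have "take (Suc i) (Fs @ [Fm]) = take (Suc i) Fs" using i by simp
    moreover have "(Fs @ [Fm]) ! i = Fs ! i" using i by (simp add: nth_append)
    ultimately show "is_leaf (set (take (Suc i) Fs)) (Fs ! i)" by simp
  qed
  have leaf: "is_leaf (set (Fs @ [Fm])) Fm" using snoc.prems(1)[rule_format, of "length Fs"] by simp
  show ?case
  proof (cases "Fm \<in> set Fs")
    case True
    then have eq: "set (Fs @ [Fm]) = set Fs" by auto
    show ?thesis using snoc.IH[OF pre snoc.prems(2)] snoc.prems(3,4) unfolding eq by blast
  next
    case notin: False
    from leaf have "set (Fs @ [Fm]) = {Fm} \<or> (\<exists>G'\<in>set (Fs @ [Fm]). G' \<noteq> Fm \<and> (\<forall>H\<in>set (Fs @ [Fm]). H \<noteq> Fm \<longrightarrow> H \<inter> Fm \<subseteq> G' \<inter> Fm))"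
      unfolding is_leaf_def by blast
    then show ?thesis
    proof
      assume "set (Fs @ [Fm]) = {Fm}"
      then show ?thesis using snoc.prems(3) by auto
    next
      assume "\<exists>G'\<in>set (Fs @ [Fm]). G' \<noteq> Fm \<and> (\<forall>H\<in>set (Fs @ [Fm]). H \<noteq> Fm \<longrightarrow> H \<inter> Fm \<subseteq> G' \<inter> Fm)"
      then obtain G' where G0: "G' \<in> set (Fs @ [Fm])" "G' \<noteq> Fm"
        and Gb0: "\<forall>H\<in>set (Fs @ [Fm]). H \<noteq> Fm \<longrightarrow> H \<inter> Fm \<subseteq> G' \<inter> Fm" by blast
      have G': "G' \<in> set Fs" using G0 by simp
      have Gb: "\<forall>H\<in>set Fs. H \<inter> Fm \<subseteq> G' \<inter> Fm"
      proof
        fix H assume H: "H \<in> set Fs"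
        then have "H \<noteq> Fm" using notin by blast
        then show "H \<inter> Fm \<subseteq> G' \<inter> Fm" using Gb0 H by simp
      qed
      show ?thesis
      proof (cases "\<exists>a\<in>C. a \<in> Fm \<and> a \<notin> \<Union>(set Fs)")
        case True
        then obtain a where a: "a \<in> C" "a \<in> Fm" "a \<notin> \<Union>(set Fs)" by blast
        have "C \<subseteq> Fm"
        proof
          fix b assume b: "b \<in> C"
          show "b \<in> Fm"
          proof (cases "b = a")
            case True then show ?thesis using a by simp
          next
            case False
            then obtain F where F: "F \<in> set (Fs @ [Fm])" "a \<in> F" "b \<in> F" using snoc.prems(4) a(1) b by metis
            then have "F = Fm" using a(3) by auto
            then show ?thesis using F by simp
          qed
        qed
        then show ?thesis by auto
      next
        case False
        have Cs: "C \<subseteq> \<Union>(set Fs)"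
        proof
          fix c assume c: "c \<in> C"
          then have "c \<in> \<Union>(set Fs) \<or> c \<in> Fm" using snoc.prems(3) by auto
          then show "c \<in> \<Union>(set Fs)" using False c by blast
        qed
        have pairs: "\<forall>a\<in>C. \<forall>b\<in>C. a \<noteq> b \<longrightarrow> (\<exists>F\<in>set Fs. a \<in> F \<and> b \<in> F)"
        proof (intro ballI impI)
          fix a b assume a: "a \<in> C" and b: "b \<in> C" and ab: "a \<noteq> b"
          then obtain F where F: "F \<in> set (Fs @ [Fm])" "a \<in> F" "b \<in> F" using snoc.prems(4) by metis
          show "\<exists>F\<in>set Fs. a \<in> F \<and> b \<in> F"
          proof (cases "F \<in> set Fs")
            case True then show ?thesis using F by blast
          next
            case False
            then have FF: "F = Fm" using F(1) by simp
            obtain Ha where Ha: "Ha \<in> set Fs" "a \<in> Ha" using Cs a by blast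
            obtain Hb where Hb: "Hb \<in> set Fs" "b \<in> Hb" using Cs b by blast
            have "a \<in> G'" using Gb Ha F(2) FF by blast
            moreover have "b \<in> G'" using Gb Hb F(3) FF by blast
            ultimately show ?thesis using G' by blast
          qed
        qed
        show ?thesis using snoc.IH[OF pre snoc.prems(2) Cs pairs] by auto
      qed
    qed
  qed
qed



lemma var_mult: "var i * var j = monom (ee i + ee j)"
  unfolding var_def monom_def by (simp add: mult_single)

lemma keys_ee: "ks (ee i + ee j) \<subseteq> {i, j}"
  using keys_add[of "ee i" "ee j"] by auto

lemma deg_ee: "mdeg (ee i + ee j) = 2"
  unfolding mdeg_add mdeg_single by simp

theorem proposition2p5:
  fixes n :: nat and M :: "(nat \<Rightarrow>\<^sub>0 nat) set" and I :: "('k::field) mpoly set"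
    and \<Delta> :: "nat set set"
  assumes M_mon: "\<forall>m\<in>M. Poly_Mapping.keys m \<subseteq> {1..n} \<and> mdeg m = 2"
    and I_def: "I = ideal_gen n (monom ` M)"
    and lin: "linear_resolution n I"
    and qt: "quasi_tree \<Delta>"
    and skel: "one_skeleton_is \<Delta> {1..n}
        (\<lambda>i j. i \<noteq> j \<and> var i * var j \<notin>
           ideal_gen n {monom m | m. squarefree_monomial m \<and> Poly_Mapping.keys m \<subseteq> {1..n} \<and> monom m \<in> I})"
  shows "(\<forall>i\<in>{1..n}. var i * var i \<in> I \<longrightarrow> free_vertex \<Delta> i)
       \<and> (\<forall>i\<in>{1..n}. \<forall>j\<in>{1..n}. i \<noteq> j \<and> var i * var i \<in> I \<and> var j * var j \<in> I
            \<longrightarrow> \<not> (\<exists>F\<in>\<Delta>. i \<in> F \<and> j \<in> F))"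
proof -
  define P where "P m \<longleftrightarrow> squarefree_monomial m \<and> ks m \<subseteq> {1..n} \<and> (monom m :: 'k mpoly) \<in> I" for m
  define J :: "'a::field mpoly set" where "J = ideal_gen n (monom ` {m. P m})"
  have Jeq: "{monom m | m. squarefree_monomial m \<and> Poly_Mapping.keys m \<subseteq> {1..n} \<and> monom m \<in> I} = monom ` {m. P m}"
    unfolding P_def by auto
  define E where "E = (\<lambda>i j. i \<noteq> j \<and> var i * var j \<notin> J)"
  have sk: "one_skeleton_is \<Delta> {1..n} E" using skel[unfolded Jeq] unfolding E_def J_def by simp
  have UV: "\<Union>\<Delta> = {1..n}" using sk unfolding one_skeleton_is_def by (rule conjunct1)
  have adj: "\<forall>i\<in>{1..n}. \<forall>j\<in>{1..n}. i \<noteq> j \<longrightarrow> (E i j \<longleftrightarrow> (\<exists>F\<in>\<Delta>. i \<in> F \<and> j \<in> F))"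
    using sk unfolding one_skeleton_is_def by (rule conjunct2)
  have MI: "m \<in> M \<Longrightarrow> (monom m :: 'k mpoly) \<in> I" for m
    unfolding I_def by (rule ideal_gen_gen) simp
  have MJ: "var i * var j \<in> J" if "i \<in> {1..n}" "j \<in> {1..n}" "i \<noteq> j" "ee i + ee j \<in> M" for i j
  proof -
    have "P (ee i + ee j)"
      unfolding P_def squarefree_monomial_def
    proof (intro conjI allI)
      fix k show "lk (ee i + ee j) k \<le> 1" using that(3) unfolding lk_ee by simp
    next
      show "ks (ee i + ee j) \<subseteq> {1..n}" using keys_ee[of i j] that(1,2) by blast
    next
      show "(monom (ee i + ee j) :: 'k mpoly) \<in> I" using MI that(4) .
    qed
    then show ?thesis unfolding var_mult J_def by (intro ideal_gen_gen) simp
  qed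
  have JM: "ee a + ee b \<in> M" if hJ: "var a * var b \<in> J" for a b
  proof -
    let ?X = "ee a + ee b"
    have X: "?X \<in> ks (monom ?X :: 'a mpoly)" unfolding monom_def by simp
    obtain m y where m: "P m" "?X = y + m"
      using ideal_gen_keys[OF hJ[unfolded var_mult J_def] X] by blast
    have "(monom m :: 'k mpoly) \<in> I" using m(1) unfolding P_def by blast
    moreover have "m \<in> ks (monom m :: 'k mpoly)" unfolding monom_def by simp
    ultimately obtain m' y' where m': "m' \<in> M" "m = y' + m'"
      using ideal_gen_keys[of _ n M m] unfolding I_def by blast
    have "mdeg ?X = mdeg y + mdeg y' + mdeg m'" using m(2) m'(2) by (simp add: mdeg_add)
    then have "mdeg y = 0" "mdeg y' = 0" using deg_ee[of a b] M_mon m'(1) by auto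
    then have "y = 0" "y' = 0" by (simp_all add: mdeg_zero)
    then show ?thesis using m(2) m'(2) m'(1) by simp
  qed
  have ks_ee: "ks (ee i + ee j) \<subseteq> {1..n}" if "i \<in> {1..n}" "j \<in> {1..n}" for i j
    using keys_ee[of i j] that by blast
  obtain Fs where Fs: "distinct Fs" "set Fs = \<Delta>" "\<forall>i<length Fs. is_leaf (set (take (Suc i) Fs)) (Fs ! i)"
    using qt unfolding quasi_tree_def by blast
  have incomp: "\<forall>F\<in>\<Delta>. \<forall>G\<in>\<Delta>. F \<subseteq> G \<longrightarrow> F = G"
    using qt unfolding quasi_tree_def facet_family_def by blast
  have part2: "\<not> (\<exists>F\<in>\<Delta>. i \<in> F \<and> j \<in> F)"
    if ij: "i \<in> {1..n}" "j \<in> {1..n}" "i \<noteq> j" and sq: "var i * var i \<in> I" "var j * var j \<in> I" for i j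
  proof
    assume "\<exists>F\<in>\<Delta>. i \<in> F \<and> j \<in> F"
    then have "E i j" using adj ij by blast
    then have nM: "ee i + ee j \<notin> M" using MJ ij unfolding E_def by blast
    show False
    proof (rule nolin[OF M_mon I_def lin])
      show "(monom (ee i + ee i) :: 'k mpoly) \<in> I" using sq(1) unfolding var_mult .
      show "(monom (ee j + ee j) :: 'k mpoly) \<in> I" using sq(2) unfolding var_mult .
      show "mdeg (ee i + ee i) = 2" "mdeg (ee j + ee j) = 2" by (rule deg_ee)+
      show "ks (ee i + ee i) \<subseteq> {1..n}" "ks (ee j + ee j) \<subseteq> {1..n}" using ks_ee ij by blast+
      show "\<forall>k. lk (ee i + ee i) k = 0 \<or> lk (ee j + ee j) k = 0" unfolding lk_ee using ij(3) by simp
      show "\<forall>w\<in>M. (\<forall>k. lk w k \<le> lk (ee i + ee i) k + lk (ee j + ee j) k) \<longrightarrow> w = ee i + ee i \<or> w = ee j + ee j"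
      proof (intro ballI impI)
        fix w assume w: "w \<in> M" and le: "\<forall>k. lk w k \<le> lk (ee i + ee i) k + lk (ee j + ee j) k"
        have "\<forall>k. k \<notin> {i,j} \<longrightarrow> lk w k = 0"
        proof (intro allI impI)
          fix k assume "k \<notin> {i,j}"
          then show "lk w k = 0" using le[rule_format, of k, unfolded lk_ee] by simp
        qed
        then have "w = ee i + ee i \<or> w = ee j + ee j \<or> w = ee i + ee j"
          using two_var[of w i j] M_mon w ij(3) by blast
        then show "w = ee i + ee i \<or> w = ee j + ee j" using nM w by blast
      qed
    qed
  qed
  have part1: "free_vertex \<Delta> i" if i: "i \<in> {1..n}" and sq: "var i * var i \<in> I" for i
  proof -
    obtain F0 where F0: "F0 \<in> \<Delta>" "i \<in> F0" using UV i by blast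
    have "{F \<in> \<Delta>. i \<in> F} = {F0}"
    proof (intro equalityI subsetI)
      fix F1 assume "F1 \<in> {F \<in> \<Delta>. i \<in> F}"
      then have F1: "F1 \<in> \<Delta>" "i \<in> F1" by auto
      let ?C = "F0 \<union> F1"
      have nbr: "E i a" if a: "a \<in> ?C" "a \<noteq> i" for a
      proof -
        have "a \<in> \<Union>\<Delta>" using a(1) F0(1) F1(1) by blast
        then have an: "a \<in> {1..n}" using UV by simp
        have ex: "\<exists>F\<in>\<Delta>. i \<in> F \<and> a \<in> F" using a(1) F0 F1 by blast
        have "i \<noteq> a" using a(2) by simp
        then show ?thesis using adj[rule_format, OF i an] ex by simp
      qed
      have pairs: "\<forall>a\<in>?C. \<forall>b\<in>?C. a \<noteq> b \<longrightarrow> (\<exists>F\<in>set Fs. a \<in> F \<and> b \<in> F)"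
      proof (intro ballI impI)
        fix a b assume a: "a \<in> ?C" and b: "b \<in> ?C" and ab: "a \<noteq> b"
        have "a \<in> \<Union>\<Delta>" "b \<in> \<Union>\<Delta>" using a b F0(1) F1(1) by blast+
        then have an: "a \<in> {1..n}" and bn: "b \<in> {1..n}" using UV by simp_all
        show "\<exists>F\<in>set Fs. a \<in> F \<and> b \<in> F"
        proof (cases "a = i \<or> b = i")
          case True
          have "\<exists>F\<in>\<Delta>. a \<in> F \<and> b \<in> F"
          proof (cases "a = i")
            case True
            show ?thesis
            proof (cases "b \<in> F0")
              case True then show ?thesis using F0 \<open>a = i\<close> by blast
            next
              case False then have "b \<in> F1" using b by simp
              then show ?thesis using F1 \<open>a = i\<close> by blast
            qed
          next
            case False then have "b = i" using \<open>a = i \<or> b = i\<close> by simp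
            show ?thesis
            proof (cases "a \<in> F0")
              case True then show ?thesis using F0 \<open>b = i\<close> by blast
            next
              case False then have "a \<in> F1" using a by simp
              then show ?thesis using F1 \<open>b = i\<close> by blast
            qed
          qed
          then show ?thesis using Fs(2) by simp
        next
          case False
          have Eab: "E a b"
          proof (rule ccontr)
            assume "\<not> E a b"
            then have "var a * var b \<in> J" using ab unfolding E_def by simp
            then have abM: "ee a + ee b \<in> M" by (rule JM)
            have ia: "i \<noteq> a" and ib: "i \<noteq> b" using False by auto
            have "E i a" using nbr[OF a] ia by simp
            then have "var i * var a \<notin> J" unfolding E_def by simp
            then have nMa: "ee i + ee a \<notin> M" using MJ[OF i an ia] by blast
            have "E i b" using nbr[OF b] ib by simp
            then have "var i * var b \<notin> J" unfolding E_def by simp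
            then have nMb: "ee i + ee b \<notin> M" using MJ[OF i bn ib] by blast
            show False
            proof (rule nolin[OF M_mon I_def lin])
              show "(monom (ee i + ee i) :: 'k mpoly) \<in> I" using sq unfolding var_mult .
              show "(monom (ee a + ee b) :: 'k mpoly) \<in> I" using MI abM .
              show "mdeg (ee i + ee i) = 2" "mdeg (ee a + ee b) = 2" by (rule deg_ee)+
              show "ks (ee i + ee i) \<subseteq> {1..n}" using ks_ee[OF i i] .
              show "ks (ee a + ee b) \<subseteq> {1..n}" using ks_ee[OF an bn] .
              show "\<forall>k. lk (ee i + ee i) k = 0 \<or> lk (ee a + ee b) k = 0" unfolding lk_ee using False by simp
              show "\<forall>w\<in>M. (\<forall>k. lk w k \<le> lk (ee i + ee i) k + lk (ee a + ee b) k) \<longrightarrow> w = ee i + ee i \<or> w = ee a + ee b"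
              proof (intro ballI impI)
                fix w assume w: "w \<in> M" and le: "\<forall>k. lk w k \<le> lk (ee i + ee i) k + lk (ee a + ee b) k"
                have z: "\<forall>k. k \<notin> {i,a,b} \<longrightarrow> lk w k = 0"
                proof (intro allI impI)
                  fix k assume "k \<notin> {i,a,b}"
                  then show "lk w k = 0" using le[rule_format, of k, unfolded lk_ee] by simp
                qed
                have wa: "lk w a \<le> 1" using le[rule_format, of a, unfolded lk_ee] False ab by simp
                have wb: "lk w b \<le> 1" using le[rule_format, of b, unfolded lk_ee] False ab by simp
                have dd: "distinct [i,a,b]" using False ab by auto
                have wd: "mdeg w = 2" using M_mon w by blast
                have "w = ee i + ee i \<or> w = ee i + ee a \<or> w = ee i + ee b \<or> w = ee a + ee b"
                  by (rule three_var[OF wd dd z wa wb])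
                then show "w = ee i + ee i \<or> w = ee a + ee b" using nMa nMb w by blast
              qed
            qed
          qed
          then have "\<exists>F\<in>\<Delta>. a \<in> F \<and> b \<in> F" using adj[rule_format, OF an bn ab] by simp
          then show ?thesis using Fs(2) by simp
        qed
      qed
      have "?C \<noteq> {}" using F0 by blast
      moreover have "?C \<subseteq> \<Union>(set Fs)" using F0(1) F1(1) Fs(2) by blast
      ultimately have "\<exists>F\<in>set Fs. ?C \<subseteq> F" by (rule flag_list[OF Fs(3) _ _ pairs])
      then obtain F where F: "F \<in> set Fs" "?C \<subseteq> F" by blast
      have FD: "F \<in> \<Delta>" using F(1) Fs(2) by simp
      have "F0 \<subseteq> F" "F1 \<subseteq> F" using F(2) by auto
      then have "F0 = F" "F1 = F" using incomp[rule_format, OF F0(1) FD] incomp[rule_format, OF F1(1) FD] by simp_all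
      then show "F1 \<in> {F0}" by simp
    next
      fix F assume "F \<in> {F0}" then show "F \<in> {F \<in> \<Delta>. i \<in> F}" using F0 by simp
    qed
    then show ?thesis unfolding free_vertex_def by simp
  qed
  show ?thesis using part1 part2 by blast
qed

end
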